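(* Let $n\geqslant 1$ and $1\leqslant d\leqslant n-1$ be integers. Then \begin{align*} &\sum_{k=1}^{n-1}q^k\begin{bmatrix}2k\\ k+d\end{bmatrix}\frac{(-q^{k+1};q)_{n-k}}{[k]} =-\sum_{k=1}^{\lfloor(n+1-d)/2\rfloor}(-1)^kq^{3k^2+(3d-5)k-2d+2}\frac{[2d+4k-2]}{[d][n]}\begin{bmatrix}2n\\ n-d-2k+1\end{bmatrix}, \end{align*} and \begin{align*} \sum_{k=1}^{n}q^k\begin{bmatrix}2k\\ k+d\end{bmatrix}\frac{(-q^{k+1};q)_{n-k}^2}{[k]} =\sum_{k=d}^{n-1}q^{\binom{k+1}{2}-\binom{d}{2}}\frac{1}{[d]}\begin{bmatrix}2n+1\\ n-k\end{bmatrix}+\frac{q^{\binom{n+1}{2}-\binom{d}{2}}}{[d]}. \end{align*}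
   Context: Here $q$ is an indeterminate, $[m]=(1-q^m)/(1-q)=1+q+\cdots+q^{m-1}$ is the $q$-integer, and $\lfloor x\rfloor$ is the largest integer $\le x$. For $n\geq 1$, $(x;q)_n=(1-x)(1-xq)\cdots(1-xq^{n-1})$ and $(x;q)_0=1$. The $q$-binomial coefficient is $\begin{bmatrix}n\\ k\end{bmatrix}=\frac{(q;q)_n}{(q;q)_k(q;q)_{n-k}}$ if $0\leqslant k\leqslant n$ and $0$ otherwise. *)

theory Defs
  imports Main
begin

definition qint :: "'a::field \<Rightarrow> nat \<Rightarrow> 'a" where
  "qint q m = (\<Sum>i<m. q ^ i)"

definition qpoch :: "'a::field \<Rightarrow> 'a \<Rightarrow> nat \<Rightarrow> 'a" where
  "qpoch x q n = (\<Prod>i<n. (1 - x * q ^ i))"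

definition qbinom :: "'a::field \<Rightarrow> int \<Rightarrow> int \<Rightarrow> 'a" where
  "qbinom q n k = (if 0 \<le> k \<and> k \<le> n
     then qpoch q q (nat n) / (qpoch q q (nat k) * qpoch q q (nat (n - k))) else 0)"

end

theory Submission
  imports Defs
begin


locale qgen =
  fixes q :: "'a::field"
  assumes hyp: "\<forall>m::nat. m > 0 \<longrightarrow> q ^ m \<noteq> 1"
begin

definition qf :: "nat \<Rightarrow> 'a" where "qf m = qpoch q q m"

lemma qf_0[simp]: "qf 0 = 1" by (simp add: qf_def qpoch_def)
lemma qf_Suc: "qf (Suc m) = qf m * (1 - q ^ Suc m)"
  by (simp add: qf_def qpoch_def)

lemma pow_ne1: "m > 0 \<Longrightarrow> 1 - q ^ m \<noteq> 0" using hyp by auto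
lemma q_ne1: "1 - q \<noteq> 0" using pow_ne1[of 1] by simp

lemma qf_nz: "qf m \<noteq> 0"
proof (induction m)
  case (Suc m)
  have "1 - q ^ Suc m \<noteq> 0" by (rule pow_ne1) simp
  then show ?case using Suc by (simp only: qf_Suc) simp
qed simp

lemma qint_eq: "qint q m = (1 - q ^ m) / (1 - q)"
proof -
  have "q \<noteq> 1" using q_ne1 by auto
  thus ?thesis by (simp add: qint_def sum_gp_strict)
qed

lemma qint_nz: "m > 0 \<Longrightarrow> qint q m \<noteq> 0"
  using pow_ne1 q_ne1 by (simp add: qint_eq)

lemma qbinom_nat: "qbinom q (int N) (int K) = (if K \<le> N then qf N / (qf K * qf (N - K)) else 0)"
  by (auto simp: qbinom_def qf_def nat_diff_distrib)

lemma qbinom_neg: "K < 0 \<Longrightarrow> qbinom q N K = 0"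
  by (simp add: qbinom_def)

lemma qbinom_sym: "0 \<le> N \<Longrightarrow> qbinom q N K = qbinom q N (N - K)"
  by (auto simp: qbinom_def mult.commute)

lemma frac_aux:
  fixes X Y Z u v :: "'b::field"
  assumes "Y \<noteq> 0" "Z \<noteq> 0" "u \<noteq> 0" "v \<noteq> 0"
  shows "X / (Y*Z) = X / ((Y*u)*(Z*v)) * u * v"
  using assms by (simp add: field_simps)

lemma qf_ratios:
  fixes a b :: nat
  defines "c \<equiv> qf (a+b) / (qf (a+1) * qf (b+1))"
  shows "qf (a+b+2) / (qf (a+1) * qf (b+1)) = c * (1 - q^(a+b+1)) * (1 - q^(a+b+2))"
    and "qf (a+b) / (qf a * qf b) = c * (1 - q^(a+1)) * (1 - q^(b+1))"
    and "qf (a+b+1) / (qf a * qf (b+1)) = c * (1 - q^(a+b+1)) * (1 - q^(a+1))"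
    and "qf (a+b+1) / (qf (a+1) * qf b) = c * (1 - q^(a+b+1)) * (1 - q^(b+1))"
proof -
  have s: "\<And>x. qf (x+1) = qf x * (1 - q^(x+1))" using qf_Suc by simp
  have s2: "qf (a+b+2) = qf (a+b) * (1 - q^(a+b+1)) * (1 - q^(a+b+2))"
    using s[of "a+b"] s[of "a+b+1"] by (simp add: ac_simps)
  have nz: "qf x \<noteq> 0" for x by (rule qf_nz)
  have nz1: "1 - q^(x+1) \<noteq> 0" for x by (rule pow_ne1) simp
  have nz3: "1 - q^(a+b+2) \<noteq> 0" by (rule pow_ne1) simp
  show "qf (a+b+2) / (qf (a+1) * qf (b+1)) = c * (1 - q^(a+b+1)) * (1 - q^(a+b+2))"
    unfolding c_def s2 using nz nz1 nz3 by (simp add: ac_simps)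
  show "qf (a+b) / (qf a * qf b) = c * (1 - q^(a+1)) * (1 - q^(b+1))"
    unfolding c_def s using frac_aux[OF nz nz nz1 nz1] by (simp add: ac_simps)
  show "qf (a+b+1) / (qf a * qf (b+1)) = c * (1 - q^(a+b+1)) * (1 - q^(a+1))"
  proof -
    have "qf (a+b+1) / (qf a * qf (b+1)) = qf (a+b+1) / ((qf a * (1 - q^(a+1))) * qf (b+1)) * (1 - q^(a+1))"
      using nz nz1 by (simp add: field_simps)
    thus ?thesis unfolding c_def s[of "a+b"] s[of a] using nz nz1 by (simp add: ac_simps)
  qed
  show "qf (a+b+1) / (qf (a+1) * qf b) = c * (1 - q^(a+b+1)) * (1 - q^(b+1))"
  proof -
    have "qf (a+b+1) / (qf (a+1) * qf b) = qf (a+b+1) / (qf (a+1) * (qf b * (1 - q^(b+1)))) * (1 - q^(b+1))"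
      using nz nz1 by (simp add: field_simps)
    thus ?thesis unfolding c_def s[of "a+b"] s[of b] using nz nz1 by (simp add: ac_simps)
  qed
qed


definition F2 :: "nat \<Rightarrow> nat \<Rightarrow> nat \<Rightarrow> 'a" where
  "F2 d n k = q^((Suc k choose 2) - (d choose 2)) * qbinom q (2*int n+1) (int n - int k)"
definition G2 :: "nat \<Rightarrow> nat \<Rightarrow> nat \<Rightarrow> 'a" where
  "G2 d n k = - (q^(n+1+(k choose 2)-(d choose 2)) * qint q k * qbinom q (2*int n+2) (int n+1+int k) / qint q (n+1))"

lemma choose2_Suc: "(Suc k choose 2) = (k choose 2) + k"
  by (simp add: numeral_2_eq_2)

lemma choose2_mono: "d \<le> k \<Longrightarrow> (d choose 2) \<le> (k choose 2)"
  by (rule binomial_right_mono)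

lemma cert2:
  assumes "d \<le> k" "k \<le> n"
  shows "F2 d (Suc n) k - (1+q^(n+1))^2 * F2 d n k = G2 d n (Suc k) - G2 d n k"
proof -
  obtain a where n: "n = a + k" using assms(2) le_Suc_ex by (metis add.commute)
  define b where "b = a + 2*k + 1"
  define c where "c = qf (a+b) / (qf (a+1) * qf (b+1))"
  define c0 where "c0 = (k choose 2) - (d choose 2)"
  have cm: "(d choose 2) \<le> (k choose 2)" using choose2_mono assms(1) .
  have b1: "qbinom q (2*int (Suc n)+1) (int (Suc n) - int k) = c * (1 - q^(a+b+1)) * (1 - q^(a+b+2))"
  proof -
    have "qbinom q (2*int (Suc n)+1) (int (Suc n) - int k) = qbinom q (int (a+b+2)) (int (a+1))"
      by (simp add: n b_def algebra_simps)
    also have "\<dots> = qf (a+b+2) / (qf (a+1) * qf (b+1))"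
      by (simp only: qbinom_nat) simp
    finally show ?thesis using qf_ratios(1)[of a b] c_def by simp
  qed
  have b2: "qbinom q (2*int n+1) (int n - int k) = c * (1 - q^(a+1)) * (1 - q^(b+1))"
  proof -
    have "qbinom q (2*int n+1) (int n - int k) = qbinom q (int (a+b)) (int a)"
      by (simp add: n b_def algebra_simps)
    also have "\<dots> = qf (a+b) / (qf a * qf b)"
      by (simp only: qbinom_nat) simp
    finally show ?thesis using qf_ratios(2)[of a b] c_def by simp
  qed
  have b3: "qbinom q (2*int n+2) (int n+1+int (Suc k)) = c * (1 - q^(a+b+1)) * (1 - q^(a+1))"
  proof -
    have "qbinom q (2*int n+2) (int n+1+int (Suc k)) = qbinom q (int (a+b+1)) (int (b+1))"
      by (simp add: n b_def algebra_simps)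
    also have "\<dots> = qf (a+b+1) / (qf a * qf (b+1))"
      by (simp only: qbinom_nat) (simp add: mult.commute)
    finally show ?thesis using qf_ratios(3)[of a b] c_def by simp
  qed
  have b4: "qbinom q (2*int n+2) (int n+1+int k) = c * (1 - q^(a+b+1)) * (1 - q^(b+1))"
  proof -
    have "qbinom q (2*int n+2) (int n+1+int k) = qbinom q (int (a+b+1)) (int b)"
      by (simp add: n b_def algebra_simps)
    also have "\<dots> = qf (a+b+1) / (qf (a+1) * qf b)"
      by (simp only: qbinom_nat) simp
    finally show ?thesis using qf_ratios(4)[of a b] c_def by simp
  qed
  have e1: "q^((Suc k choose 2) - (d choose 2)) = q^c0 * q^k"
  proof -
    have "(Suc k choose 2) - (d choose 2) = c0 + k"
      using cm by (simp add: c0_def choose2_Suc)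
    thus ?thesis by (simp add: power_add)
  qed
  have e2: "q^(n+1+(Suc k choose 2)-(d choose 2)) = q^c0 * (q*q^a*q^k) * q^k"
  proof -
    have "n+1+(Suc k choose 2)-(d choose 2) = c0 + (a+k+1) + k"
      using cm by (simp add: c0_def choose2_Suc n)
    thus ?thesis by (simp add: power_add)
  qed
  have e3: "q^(n+1+(k choose 2)-(d choose 2)) = q^c0 * (q*q^a*q^k)"
  proof -
    have "n+1+(k choose 2)-(d choose 2) = c0 + (a+k+1)"
      using cm by (simp add: c0_def n)
    thus ?thesis by (simp add: power_add)
  qed
  have p1: "q^(a+b+1) = q^2*(q^a)^2*(q^k)^2" unfolding b_def
    by (simp add: power_add power_mult_distrib power_mult[symmetric] mult.commute)
       (simp add: algebra_simps power2_eq_square)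
  have p2: "q^(a+b+2) = q^3*(q^a)^2*(q^k)^2" unfolding b_def
    by (simp add: power_add power_mult_distrib power_mult[symmetric] mult.commute)
       (simp add: algebra_simps power2_eq_square power3_eq_cube)
  have p3: "q^(a+1) = q*q^a" by simp
  have p4: "q^(b+1) = q^2*q^a*(q^k)^2" unfolding b_def
    by (simp add: power_add power_mult_distrib power_mult[symmetric] mult.commute)
       (simp add: algebra_simps power2_eq_square)
  have p5: "q^(n+1) = q*q^a*q^k" by (simp add: n power_add)
  have i1: "qint q (Suc k) = (1 - q*q^k)/(1-q)" by (simp add: qint_eq)
  have i2: "qint q k = (1 - q^k)/(1-q)" by (simp add: qint_eq)
  have i3: "qint q (n+1) = (1 - q*q^a*q^k)/(1-q)" using p5 by (simp add: qint_eq)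
  have nz: "1 - q \<noteq> 0" "1 - q*q^a*q^k \<noteq> 0" using q_ne1 pow_ne1[of "n+1"] p5 by (auto simp: ac_simps)
  show ?thesis
    unfolding F2_def G2_def b1 b2 b3 b4 e1 e2 e3 p1 p2 p3 p4 p5 i1 i2 i3
    using nz
    apply (simp add: divide_simps)
    by algebra
qed

end


context qgen begin

definition S2 :: "nat \<Rightarrow> nat \<Rightarrow> 'a" where
  "S2 d n = (\<Sum>k=1..n. q ^ k * qbinom q (2*int k) (int k + int d)
            * (qpoch (- (q ^ (k+1))) q (n - k)) ^ 2 / qint q k)"
definition T2 :: "nat \<Rightarrow> nat \<Rightarrow> 'a" where
  "T2 d n = (1 / qint q d) * (\<Sum>k=d..n. F2 d n k)"

lemma poch_step: "k \<le> n \<Longrightarrow> qpoch (- (q ^ (k+1))) q (Suc n - k) = qpoch (- (q ^ (k+1))) q (n - k) * (1 + q^(n+1))"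
proof -
  assume "k \<le> n"
  then obtain m where n: "n = k + m" using le_Suc_ex by blast
  have "Suc n - k = Suc m" "n - k = m" using n by auto
  moreover have "q^(k+1) * q^m = q^(n+1)" by (simp add: n power_add)
  ultimately show ?thesis by (simp add: qpoch_def)
qed

lemma poch_step': "k \<le> n \<Longrightarrow> qpoch (- (q * q ^ k)) q (Suc n - k) = qpoch (- (q * q ^ k)) q (n - k) * (1 + q * q^n)"
  using poch_step by simp

lemma S2_step: "S2 d (Suc n) = (1+q^(n+1))^2 * S2 d n + q^(n+1) * qbinom q (2*int (Suc n)) (int (Suc n) + int d) / qint q (Suc n)"
proof -
  have "S2 d (Suc n) = (\<Sum>k=1..n. q ^ k * qbinom q (2*int k) (int k + int d)
            * (qpoch (- (q ^ (k+1))) q (Suc n - k)) ^ 2 / qint q k)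
       + q^(Suc n) * qbinom q (2*int (Suc n)) (int (Suc n) + int d) / qint q (Suc n)"
    unfolding S2_def by (simp add: qpoch_def)
  also have "(\<Sum>k=1..n. q ^ k * qbinom q (2*int k) (int k + int d)
            * (qpoch (- (q ^ (k+1))) q (Suc n - k)) ^ 2 / qint q k)
     = (\<Sum>k=1..n. (1+q^(n+1))^2 * (q ^ k * qbinom q (2*int k) (int k + int d)
            * (qpoch (- (q ^ (k+1))) q (n - k)) ^ 2 / qint q k))"
    by (rule sum.cong) (auto simp: poch_step' power_mult_distrib)
  also have "\<dots> = (1+q^(n+1))^2 * S2 d n" unfolding S2_def by (simp add: sum_distrib_left)
  finally show ?thesis by simp
qed

lemma T2_step:
  assumes "d \<le> n" "d \<ge> 1"
  shows "T2 d (Suc n) = (1+q^(n+1))^2 * T2 d n + q^(n+1) * qbinom q (2*int (Suc n)) (int (Suc n) + int d) / qint q (Suc n)"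
proof -
  have dz: "qint q d \<noteq> 0" using qint_nz assms by auto
  have "(\<Sum>k=d..Suc n. F2 d (Suc n) k) = (\<Sum>k=d..n. F2 d (Suc n) k) + F2 d (Suc n) (Suc n)"
    using assms by simp
  also have "(\<Sum>k=d..n. F2 d (Suc n) k) = (\<Sum>k=d..n. (1+q^(n+1))^2 * F2 d n k + (G2 d n (Suc k) - G2 d n k))"
    by (rule sum.cong) (auto simp: cert2[symmetric])
  also have "\<dots> = (1+q^(n+1))^2 * (\<Sum>k=d..n. F2 d n k) + (G2 d n (Suc n) - G2 d n d)"
    using assms by (simp add: sum.distrib sum_distrib_left sum_Suc_diff)
  finally have A: "(\<Sum>k=d..Suc n. F2 d (Suc n) k) = (1+q^(n+1))^2 * (\<Sum>k=d..n. F2 d n k) + (G2 d n (Suc n) - G2 d n d) + F2 d (Suc n) (Suc n)" .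
  have B: "F2 d (Suc n) (Suc n) = - G2 d n (Suc n)"
  proof -
    have cm: "(d choose 2) \<le> (Suc n choose 2)" using assms by (intro choose2_mono) auto
    have ex: "(Suc (Suc n) choose 2) - (d choose 2) = n+1+(Suc n choose 2)-(d choose 2)"
      using cm choose2_Suc[of "Suc n"] by simp
    have nz: "qint q (n+1) \<noteq> 0" using qint_nz by simp
    have b1: "qbinom q (2*int (Suc n)+1) (int (Suc n) - int (Suc n)) = 1"
    proof -
      have "qbinom q (2*int (Suc n)+1) (int (Suc n) - int (Suc n)) = qbinom q (int (2*n+3)) (int 0)" by (simp add: algebra_simps)
      thus ?thesis using qf_nz by (simp only: qbinom_nat) simp
    qed
    have b2: "qbinom q (2*int n+2) (int n+1+int (Suc n)) = 1"
    proof -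
      have "qbinom q (2*int n+2) (int n+1+int (Suc n)) = qbinom q (int (2*n+2)) (int (2*n+2))" by (simp add: algebra_simps)
      thus ?thesis using qf_nz by (simp only: qbinom_nat) simp
    qed
    show ?thesis unfolding F2_def G2_def b1 b2 ex using nz by simp
  qed
  have C: "- G2 d n d = q^(n+1) * qint q d * qbinom q (2*int n+2) (int n+1+int d) / qint q (n+1)"
    unfolding G2_def by simp
  have "(\<Sum>k=d..Suc n. F2 d (Suc n) k) = (1+q^(n+1))^2 * (\<Sum>k=d..n. F2 d n k)
     + q^(n+1) * qint q d * qbinom q (2*int n+2) (int n+1+int d) / qint q (n+1)"
    unfolding A B C[symmetric] by simp
  thus ?thesis unfolding T2_def using dz
    by (simp add: field_simps)
qed

lemma S2_base: "d \<ge> 1 \<Longrightarrow> S2 d d = q^d / qint q d"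
proof -
  assume d: "d \<ge> 1"
  obtain m where m: "d = Suc m" using d by (cases d) auto
  define f where "f k = q ^ k * qbinom q (2*int k) (int k + int d) * (qpoch (- (q ^ (k+1))) q (d - k)) ^ 2 / qint q k" for k
  have 1: "S2 d d = sum f {1..d}" by (simp add: S2_def f_def)
  have 2: "sum f {1..d} = sum f {1..m} + f d" by (simp add: m)
  have 3: "sum f {1..m} = 0" by (rule sum.neutral) (auto simp: f_def qbinom_def m)
  have 4: "qbinom q (2*int d) (int d + int d) = 1"
  proof -
    have "qbinom q (2*int d) (int d + int d) = qbinom q (int (2*d)) (int (2*d))" by (simp add: algebra_simps)
    thus ?thesis using qf_nz by (simp only: qbinom_nat) simp
  qed
  have 5: "f d = q^d / qint q d" unfolding f_def 4 by (simp add: qpoch_def)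
  show ?thesis using 1 2 3 5 by simp
qed

lemma T2_base: "d \<ge> 1 \<Longrightarrow> T2 d d = q^d / qint q d"
proof -
  have e: "(Suc d choose 2) - (d choose 2) = d" by (simp add: choose2_Suc)
  have "qbinom q (2*int d+1) 0 = qbinom q (int (2*d+1)) (int 0)" by (simp add: algebra_simps)
  hence "qbinom q (2*int d+1) 0 = 1" using qf_nz by (simp only: qbinom_nat) simp
  thus "T2 d d = q^d / qint q d" unfolding T2_def F2_def using e by simp
qed

lemma id2:
  assumes d1: "d \<ge> 1" and dn: "d \<le> n"
  shows "S2 d n = T2 d n"
  using dn
proof (induction n rule: dec_induct)
  case base
  then show ?case using S2_base T2_base d1 by simp
next
  case (step n)
  then show ?case using S2_step T2_step d1 by simp
qed

end


context qgen begin

lemma frac_aux2: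
  fixes X Y Z u :: "'b::field"
  assumes "Y \<noteq> 0" "Z \<noteq> 0" "u \<noteq> 0"
  shows "X / (Y*Z) = X / ((Y*u)*Z) * u" and "X / (Y*Z) = X / (Y*(Z*u)) * u"
  using assms by (simp_all add: field_simps)

lemma qf_ratios2:
  fixes a b :: nat
  defines "c \<equiv> qf (a+b+2) / (qf (a+2) * qf (b+2))"
  shows "qf (a+b+4) / (qf (a+2) * qf (b+2)) = c * (1 - q^(a+b+3)) * (1 - q^(a+b+4))"
    and "qf (a+b+2) / (qf (a+1) * qf (b+1)) = c * (1 - q^(a+2)) * (1 - q^(b+2))"
    and "qf (a+b+2) / (qf a * qf (b+2)) = c * (1 - q^(a+1)) * (1 - q^(a+2))"
    and "qf (a+b+2) / (qf (a+2) * qf b) = c * (1 - q^(b+1)) * (1 - q^(b+2))"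
proof -
  have s: "\<And>x. qf (x+1) = qf x * (1 - q^(x+1))" using qf_Suc by simp
  have s2: "\<And>x. qf (x+2) = qf x * (1 - q^(x+1)) * (1 - q^(x+2))"
    using s by (metis Suc_eq_plus1 add_Suc_right one_add_one)
  have nz: "qf x \<noteq> 0" for x by (rule qf_nz)
  have nz1: "1 - q^(x+1) \<noteq> 0" for x by (rule pow_ne1) simp
  have nz2: "1 - q^(x+2) \<noteq> 0" for x by (rule pow_ne1) simp
  have e4: "a+b+4 = (a+b+2)+2" "a+b+3 = (a+b+2)+1" by simp_all
  show "qf (a+b+4) / (qf (a+2) * qf (b+2)) = c * (1 - q^(a+b+3)) * (1 - q^(a+b+4))"
    unfolding c_def e4 s2[of "a+b+2"] using nz by (simp add: ac_simps)
  show "qf (a+b+2) / (qf (a+1) * qf (b+1)) = c * (1 - q^(a+2)) * (1 - q^(b+2))"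
  proof -
    have "qf (a+2) = qf (a+1) * (1 - q^(a+2))" "qf (b+2) = qf (b+1) * (1 - q^(b+2))"
      using s[of "a+1"] s[of "b+1"] by (simp_all add: add.assoc)
    thus ?thesis unfolding c_def using frac_aux[OF nz nz nz2 nz2] by (simp add: ac_simps)
  qed
  show "qf (a+b+2) / (qf a * qf (b+2)) = c * (1 - q^(a+1)) * (1 - q^(a+2))"
  proof -
    have "qf (a+b+2) / (qf a * qf (b+2)) = qf (a+b+2) / ((qf a * ((1 - q^(a+1)) * (1 - q^(a+2)))) * qf (b+2)) * ((1 - q^(a+1)) * (1 - q^(a+2)))"
      using frac_aux2(1)[OF nz nz, of "(1 - q^(a+1)) * (1 - q^(a+2))"] nz1 nz2 by simp
    thus ?thesis unfolding c_def s2[of a] using nz nz1 by (simp add: ac_simps)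
  qed
  show "qf (a+b+2) / (qf (a+2) * qf b) = c * (1 - q^(b+1)) * (1 - q^(b+2))"
  proof -
    have "qf (a+b+2) / (qf (a+2) * qf b) = qf (a+b+2) / (qf (a+2) * (qf b * ((1 - q^(b+1)) * (1 - q^(b+2))))) * ((1 - q^(b+1)) * (1 - q^(b+2)))"
      using frac_aux2(2)[OF nz nz, of "(1 - q^(b+1)) * (1 - q^(b+2))"] nz1 nz2 by simp
    thus ?thesis unfolding c_def s2[of b] using nz nz1 by (simp add: ac_simps)
  qed
qed

definition E1 :: "nat \<Rightarrow> nat \<Rightarrow> nat" where "E1 d i = 3*i^2 + i + 3*d*i + d"

definition F1 :: "nat \<Rightarrow> nat \<Rightarrow> nat \<Rightarrow> 'a" where
  "F1 d n i = (-1)^i * q^(E1 d i) * qint q (2*d+4*i+2) * qbinom q (2*int n) (int n - int d - 2*int i - 1) / qint q n"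
definition G1 :: "nat \<Rightarrow> nat \<Rightarrow> nat \<Rightarrow> 'a" where
  "G1 d n i = (-1)^(i+1) * q^(n + 3*i^2 + 3*d*i - i) * qint q (2*i+d) * (1+q^(n+1)) * qbinom q (2*int n) (int n - int d - 2*int i) / qint q n"

lemma pw: "q^(m*x) = (q^x)^m" by (metis power_mult mult.commute)

lemma cert1A:
  assumes "n = a + 2 + d + 2*i"
  shows "F1 d (Suc n) i - (1+q^(n+1)) * F1 d n i = G1 d n (Suc i) - G1 d n i"
proof -
  define b where "b = a + 2 + 2*d + 4*i"
  define c where "c = qf (a+b+2) / (qf (a+2) * qf (b+2))"
  define P where "P = q^(3*i^2+3*d*i)"
  define S :: 'a where "S = (-1)^i"
  have b1: "qbinom q (2*int (Suc n)) (int (Suc n) - int d - 2*int i - 1) = c * (1 - q^(a+b+3)) * (1 - q^(a+b+4))"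
  proof -
    have "qbinom q (2*int (Suc n)) (int (Suc n) - int d - 2*int i - 1) = qbinom q (int (a+b+4)) (int (a+2))"
      by (simp add: assms b_def algebra_simps)
    also have "\<dots> = qf (a+b+4) / (qf (a+2) * qf (b+2))"
      by (simp only: qbinom_nat) simp
    finally show ?thesis using qf_ratios2(1)[of a b] c_def by simp
  qed
  have b2: "qbinom q (2*int n) (int n - int d - 2*int i - 1) = c * (1 - q^(a+2)) * (1 - q^(b+2))"
  proof -
    have "qbinom q (2*int n) (int n - int d - 2*int i - 1) = qbinom q (int (a+b+2)) (int (a+1))"
      by (simp add: assms b_def algebra_simps)
    also have "\<dots> = qf (a+b+2) / (qf (a+1) * qf (b+1))"
      by (simp only: qbinom_nat) simp
    finally show ?thesis using qf_ratios2(2)[of a b] c_def by simp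
  qed
  have b3: "qbinom q (2*int n) (int n - int d - 2*int (Suc i)) = c * (1 - q^(a+1)) * (1 - q^(a+2))"
  proof -
    have "qbinom q (2*int n) (int n - int d - 2*int (Suc i)) = qbinom q (int (a+b+2)) (int a)"
      by (simp add: assms b_def algebra_simps)
    also have "\<dots> = qf (a+b+2) / (qf a * qf (b+2))"
      by (simp only: qbinom_nat) simp
    finally show ?thesis using qf_ratios2(3)[of a b] c_def by simp
  qed
  have b4: "qbinom q (2*int n) (int n - int d - 2*int i) = c * (1 - q^(b+1)) * (1 - q^(b+2))"
  proof -
    have "qbinom q (2*int n) (int n - int d - 2*int i) = qbinom q (int (a+b+2)) (int (a+2))"
      by (simp add: assms b_def algebra_simps)
    also have "\<dots> = qf (a+b+2) / (qf (a+2) * qf b)"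
      by (simp only: qbinom_nat) simp
    finally show ?thesis using qf_ratios2(4)[of a b] c_def by simp
  qed
  have x1: "q^(E1 d i) = P * q^i * q^d"
  proof -
    have "E1 d i = (3*i^2+3*d*i) + i + d" by (simp add: E1_def)
    thus ?thesis by (simp add: P_def power_add)
  qed
  have x2: "q^(n + 3*(Suc i)^2 + 3*d*(Suc i) - Suc i) = P * q^a * q^4 * (q^d)^4 * (q^i)^7"
  proof -
    have "n + 3*(Suc i)^2 + 3*d*(Suc i) - Suc i = (3*i^2+3*d*i) + a + 4 + 4*d + 7*i"
      by (simp add: assms power2_eq_square algebra_simps)
    thus ?thesis by (simp only: P_def power_add pw)
  qed
  have x3: "q^(n + 3*i^2 + 3*d*i - i) = P * q^a * q^2 * q^d * q^i"
  proof -
    have "n + 3*i^2 + 3*d*i - i = (3*i^2+3*d*i) + a + 2 + d + i"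
      by (simp add: assms power2_eq_square algebra_simps)
    thus ?thesis by (simp only: P_def power_add)
  qed
  have pn: "q^n = q^a * q^2 * q^d * (q^i)^2"
    by (simp only: assms power_add pw)
  have p1: "q^(a+b+3) = q^5 * (q^a)^2 * (q^d)^2 * (q^i)^4"
  proof -
    have e: "a+b+3 = 5 + 2*a + 2*d + 4*i" by (simp add: b_def)
    show ?thesis by (simp only: e power_add pw)
  qed
  have p2: "q^(a+b+4) = q^6 * (q^a)^2 * (q^d)^2 * (q^i)^4"
  proof -
    have e: "a+b+4 = 6 + 2*a + 2*d + 4*i" by (simp add: b_def)
    show ?thesis by (simp only: e power_add pw)
  qed
  have p3: "q^(a+1) = q * q^a" "q^(a+2) = q^2 * q^a" by (simp_all add: power_add power2_eq_square ac_simps)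
  have p4: "q^(b+1) = q^3 * q^a * (q^d)^2 * (q^i)^4"
  proof -
    have e: "b+1 = 3 + a + 2*d + 4*i" by (simp add: b_def)
    show ?thesis by (simp only: e power_add pw)
  qed
  have p5: "q^(b+2) = q^4 * q^a * (q^d)^2 * (q^i)^4"
  proof -
    have e: "b+2 = 4 + a + 2*d + 4*i" by (simp add: b_def)
    show ?thesis by (simp only: e power_add pw)
  qed
  have i1: "qint q (2*d+4*i+2) = (1 - q^2 * (q^d)^2 * (q^i)^4) / (1-q)"
  proof -
    have e: "2*d+4*i+2 = 2 + 2*d + 4*i" by simp
    show ?thesis by (simp only: qint_eq e power_add pw)
  qed
  have i2: "qint q (2*Suc i+d) = (1 - q^2 * (q^i)^2 * q^d) / (1-q)"
  proof -
    have e: "2*Suc i+d = 2 + 2*i + d" by simp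
    show ?thesis by (simp only: qint_eq e power_add pw)
  qed
  have i3: "qint q (2*i+d) = (1 - (q^i)^2 * q^d) / (1-q)"
    by (simp only: qint_eq power_add pw)
  have i4: "qint q n = (1 - q^a * q^2 * q^d * (q^i)^2) / (1-q)"
    using pn by (simp only: qint_eq)
  have pn1: "q^(n+1) = q^a * q^3 * q^d * (q^i)^2" using pn by (simp add: power2_eq_square power3_eq_cube ac_simps)
  have i5: "qint q (Suc n) = (1 - q^a * q^3 * q^d * (q^i)^2) / (1-q)"
    using pn1 by (simp only: qint_eq Suc_eq_plus1)
  have nz: "1 - q \<noteq> 0" "1 - q^a * q^2 * q^d * (q^i)^2 \<noteq> 0" "1 - q^a * q^3 * q^d * (q^i)^2 \<noteq> 0"
    using q_ne1 pow_ne1[of n, unfolded pn] pow_ne1[of "n+1", unfolded pn1] assms by auto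
  have sg: "(-1::'a)^(Suc i + 1) = S" "(-1::'a)^(i+1) = - S" by (simp_all add: S_def)
  have x1': "q^(E1 d i) = P * q^i * q^d" by (rule x1)
  show ?thesis
    unfolding F1_def G1_def
    unfolding b1 b2 b3 b4 x1 x2 x3 i1 i2 i3 i4 i5 pn1 sg S_def[symmetric] p1 p2 p3 p4 p5
    using nz
    apply (simp add: divide_simps)
    by algebra
qed

lemma qbinom_1: "qbinom q (int (Suc m)) 1 = (1 - q^(Suc m)) / (1 - q)"
proof -
  have "qbinom q (int (Suc m)) 1 = qbinom q (int (Suc m)) (int 1)" by simp
  also have "\<dots> = qf (Suc m) / (qf 1 * qf m)" by (simp only: qbinom_nat) simp
  also have "\<dots> = (1 - q^(Suc m)) / (1 - q)" using qf_nz[of m] by (simp add: qf_Suc)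
  finally show ?thesis .
qed

lemma qbinom_0: "N \<ge> 0 \<Longrightarrow> qbinom q N 0 = 1"
proof -
  assume "N \<ge> 0"
  moreover have "qpoch q q 0 = 1" by (simp add: qpoch_def)
  moreover have "qpoch q q (nat N) \<noteq> 0" using qf_nz[of "nat N"] by (simp add: qf_def)
  ultimately show ?thesis by (simp add: qbinom_def)
qed

lemma cert1B:
  assumes "n = d + 2*i + 1"
  shows "F1 d (Suc n) i - (1+q^(n+1)) * F1 d n i = G1 d n (Suc i) - G1 d n i"
proof -
  define P where "P = q^(3*i^2+3*d*i)"
  define S :: 'a where "S = (-1)^i"
  have b1: "qbinom q (2*int (Suc n)) (int (Suc n) - int d - 2*int i - 1) = (1 - q^4 * (q^d)^2 * (q^i)^4) / (1-q)"
  proof -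
    have "qbinom q (2*int (Suc n)) (int (Suc n) - int d - 2*int i - 1) = qbinom q (int (Suc (2*n+1))) 1"
      by (simp add: assms algebra_simps)
    also have "\<dots> = (1 - q^(Suc (2*n+1))) / (1 - q)" by (rule qbinom_1)
    also have "Suc (2*n+1) = 4 + 2*d + 4*i" using assms by simp
    finally show ?thesis by (simp only: power_add pw)
  qed
  have b2: "qbinom q (2*int n) (int n - int d - 2*int i - 1) = 1"
    using qbinom_0 assms by simp
  have b3: "qbinom q (2*int n) (int n - int d - 2*int (Suc i)) = 0"
    using qbinom_neg assms by simp
  have b4: "qbinom q (2*int n) (int n - int d - 2*int i) = (1 - q^2 * (q^d)^2 * (q^i)^4) / (1-q)"
  proof -
    have "qbinom q (2*int n) (int n - int d - 2*int i) = qbinom q (int (Suc (2*n-1))) 1"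
      using assms by (simp add: algebra_simps)
    also have "\<dots> = (1 - q^(Suc (2*n-1))) / (1 - q)" by (rule qbinom_1)
    also have "Suc (2*n-1) = 2 + 2*d + 4*i" using assms by simp
    finally show ?thesis by (simp only: power_add pw)
  qed
  have x1: "q^(E1 d i) = P * q^i * q^d"
  proof -
    have "E1 d i = (3*i^2+3*d*i) + i + d" by (simp add: E1_def)
    thus ?thesis by (simp add: P_def power_add)
  qed
  have x3: "q^(n + 3*i^2 + 3*d*i - i) = P * q * q^d * q^i"
  proof -
    have "n + 3*i^2 + 3*d*i - i = (3*i^2+3*d*i) + 1 + d + i"
      by (simp add: assms power2_eq_square algebra_simps)
    thus ?thesis by (simp add: P_def power_add)
  qed
  have pn: "q^n = q * q^d * (q^i)^2"
    by (simp only: assms power_add pw) simp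
  have i1: "qint q (2*d+4*i+2) = (1 - q^2 * (q^d)^2 * (q^i)^4) / (1-q)"
  proof -
    have e: "2*d+4*i+2 = 2 + 2*d + 4*i" by simp
    show ?thesis by (simp only: qint_eq e power_add pw)
  qed
  have i3: "qint q (2*i+d) = (1 - (q^i)^2 * q^d) / (1-q)"
    by (simp only: qint_eq power_add pw)
  have i4: "qint q n = (1 - q * q^d * (q^i)^2) / (1-q)"
    using pn by (simp only: qint_eq)
  have pn1: "q^(n+1) = q^2 * q^d * (q^i)^2" using pn by (simp add: power2_eq_square power3_eq_cube ac_simps)
  have i5: "qint q (Suc n) = (1 - q^2 * q^d * (q^i)^2) / (1-q)"
    using pn1 by (simp only: qint_eq Suc_eq_plus1)
  have nz: "1 - q \<noteq> 0" "1 - q * q^d * (q^i)^2 \<noteq> 0" "1 - q^2 * q^d * (q^i)^2 \<noteq> 0"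
    using q_ne1 pow_ne1[of n, unfolded pn] pow_ne1[of "n+1", unfolded pn1] assms by auto
  have sg: "(-1::'a)^(i+1) = - S" by (simp add: S_def)
  show ?thesis
    unfolding F1_def G1_def
    unfolding b1 b2 b3 b4 x1 x3 i1 i3 i4 i5 pn1 sg S_def[symmetric]
    using nz
    apply (simp add: divide_simps)
    by algebra
qed

lemma cert1C:
  assumes "n = d + 2*i" "d \<ge> 1"
  shows "F1 d (Suc n) i - (1+q^(n+1)) * F1 d n i = G1 d n (Suc i) - G1 d n i"
proof -
  define P where "P = q^(3*i^2+3*d*i)"
  define S :: 'a where "S = (-1)^i"
  have b1: "qbinom q (2*int (Suc n)) (int (Suc n) - int d - 2*int i - 1) = 1"
    using qbinom_0 assms by simp
  have b2: "qbinom q (2*int n) (int n - int d - 2*int i - 1) = 0"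
    using qbinom_neg assms by simp
  have b3: "qbinom q (2*int n) (int n - int d - 2*int (Suc i)) = 0"
    using qbinom_neg assms by simp
  have b4: "qbinom q (2*int n) (int n - int d - 2*int i) = 1"
    using qbinom_0 assms by simp
  have x1: "q^(E1 d i) = P * q^i * q^d"
  proof -
    have "E1 d i = (3*i^2+3*d*i) + i + d" by (simp add: E1_def)
    thus ?thesis by (simp add: P_def power_add)
  qed
  have x3: "q^(n + 3*i^2 + 3*d*i - i) = P * q^d * q^i"
  proof -
    have "n + 3*i^2 + 3*d*i - i = (3*i^2+3*d*i) + d + i"
      by (simp add: assms power2_eq_square algebra_simps)
    thus ?thesis by (simp add: P_def power_add)
  qed
  have pn: "q^n = q^d * (q^i)^2"
    by (simp only: assms power_add pw)
  have i1: "qint q (2*d+4*i+2) = (1 - q^2 * (q^d)^2 * (q^i)^4) / (1-q)"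
  proof -
    have e: "2*d+4*i+2 = 2 + 2*d + 4*i" by simp
    show ?thesis by (simp only: qint_eq e power_add pw)
  qed
  have i3: "qint q (2*i+d) = (1 - (q^i)^2 * q^d) / (1-q)"
    by (simp only: qint_eq power_add pw)
  have i4: "qint q n = (1 - q^d * (q^i)^2) / (1-q)"
    using pn by (simp only: qint_eq)
  have pn1: "q^(n+1) = q * q^d * (q^i)^2" using pn by (simp add: power2_eq_square power3_eq_cube ac_simps)
  have i5: "qint q (Suc n) = (1 - q * q^d * (q^i)^2) / (1-q)"
    using pn1 by (simp only: qint_eq Suc_eq_plus1)
  have nz: "1 - q \<noteq> 0" "1 - q^d * (q^i)^2 \<noteq> 0" "1 - q * q^d * (q^i)^2 \<noteq> 0"
    using q_ne1 pow_ne1[of n, unfolded pn] pow_ne1[of "n+1", unfolded pn1] assms by auto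
  have sg: "(-1::'a)^(i+1) = - S" by (simp add: S_def)
  show ?thesis
    unfolding F1_def G1_def
    unfolding b1 b2 b3 b4 x1 x3 i1 i3 i4 i5 pn1 sg S_def[symmetric]
    using nz
    apply (simp add: divide_simps)
    by algebra
qed

lemma cert1D:
  assumes "n < d + 2*i"
  shows "F1 d (Suc n) i - (1+q^(n+1)) * F1 d n i = G1 d n (Suc i) - G1 d n i"
  unfolding F1_def G1_def using assms by (simp add: qbinom_neg)

lemma cert1:
  assumes "d \<ge> 1"
  shows "F1 d (Suc n) i - (1+q^(n+1)) * F1 d n i = G1 d n (Suc i) - G1 d n i"
proof -
  consider "n < d + 2*i" | "n = d + 2*i" | "n = d + 2*i + 1" | "d + 2*i + 2 \<le> n"
    by linarith
  then show ?thesis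
  proof cases
    case 1 then show ?thesis by (rule cert1D)
  next
    case 2 then show ?thesis using assms by (rule cert1C)
  next
    case 3 then show ?thesis by (rule cert1B)
  next
    case 4
    then have "n = (n - (d + 2*i + 2)) + 2 + d + 2*i" by simp
    then show ?thesis by (rule cert1A)
  qed
qed

end


context qgen begin

definition S1 :: "nat \<Rightarrow> nat \<Rightarrow> 'a" where
  "S1 d n = (\<Sum>k=1..n-1. q ^ k * qbinom q (2*int k) (int k + int d)
            * qpoch (- (q ^ (k+1))) q (n - k) / qint q k)"
definition T1 :: "nat \<Rightarrow> nat \<Rightarrow> 'a" where
  "T1 d n = (1 / qint q d) * (\<Sum>i<Suc n. F1 d n i)"

lemma S1_step:
  assumes "n \<ge> 1"
  shows "S1 d (Suc n) = (1+q^(n+1)) * (S1 d n + q^n * qbinom q (2*int n) (int n + int d) / qint q n)"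
proof -
  obtain m where m: "n = Suc m" using assms by (cases n) auto
  define f where "f k = q ^ k * qbinom q (2*int k) (int k + int d) * qpoch (- (q ^ (k+1))) q (Suc n - k) / qint q k" for k
  define g where "g k = q ^ k * qbinom q (2*int k) (int k + int d) * qpoch (- (q ^ (k+1))) q (n - k) / qint q k" for k
  have 1: "S1 d (Suc n) = sum f {1..n}" by (simp add: S1_def f_def)
  have 2: "sum f {1..n} = sum f {1..m} + f n" by (simp add: m)
  have 3: "sum f {1..m} = (1+q^(n+1)) * sum g {1..m}"
    unfolding sum_distrib_left
  proof (rule sum.cong[OF refl])
    fix k assume "k \<in> {1..m}"
    hence "k \<le> n" using m by simp
    thus "f k = (1 + q ^ (n + 1)) * g k" unfolding f_def g_def using poch_step[of k n] by simp
  qed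
  have 4: "S1 d n = sum g {1..m}" by (simp add: S1_def g_def m)
  have 5: "f n = (1+q^(n+1)) * (q^n * qbinom q (2*int n) (int n + int d) / qint q n)"
    unfolding f_def by (simp add: qpoch_def)
  show ?thesis using 1 2 3 4 5 by (simp add: algebra_simps)
qed

lemma T1_step:
  assumes "n \<ge> 1" "d \<ge> 1" "d \<le> n"
  shows "T1 d (Suc n) = (1+q^(n+1)) * (T1 d n + q^n * qbinom q (2*int n) (int n + int d) / qint q n)"
proof -
  have dz: "qint q d \<noteq> 0" using qint_nz assms by auto
  have A: "(\<Sum>i<Suc (Suc n). F1 d (Suc n) i) = (\<Sum>i<Suc n. F1 d (Suc n) i) + F1 d (Suc n) (Suc n)"
    by simp
  have B: "F1 d (Suc n) (Suc n) = 0" unfolding F1_def by (simp add: qbinom_neg)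
  have C: "(\<Sum>i<Suc n. F1 d (Suc n) i) = (\<Sum>i<Suc n. (1+q^(n+1)) * F1 d n i + (G1 d n (Suc i) - G1 d n i))"
  proof (rule sum.cong[OF refl])
    fix i
    have "F1 d (Suc n) i - (1+q^(n+1)) * F1 d n i = G1 d n (Suc i) - G1 d n i" by (rule cert1[OF assms(2)])
    thus "F1 d (Suc n) i = (1+q^(n+1)) * F1 d n i + (G1 d n (Suc i) - G1 d n i)"
      by (metis diff_add_cancel add.commute)
  qed
  have D: "\<dots> = (1+q^(n+1)) * (\<Sum>i<Suc n. F1 d n i) + (G1 d n (Suc n) - G1 d n 0)"
    by (simp only: sum.distrib sum_distrib_left sum_lessThan_telescope)
  have E: "G1 d n (Suc n) = 0" unfolding G1_def by (simp add: qbinom_neg)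
  have G: "- G1 d n 0 = q^n * qint q d * (1+q^(n+1)) * qbinom q (2*int n) (int n - int d) / qint q n"
    unfolding G1_def by simp
  have H: "qbinom q (2*int n) (int n - int d) = qbinom q (2*int n) (int n + int d)"
    using qbinom_sym[of "2*int n" "int n - int d"] by simp
  have "(\<Sum>i<Suc (Suc n). F1 d (Suc n) i) = (1+q^(n+1)) * (\<Sum>i<Suc n. F1 d n i)
       + q^n * qint q d * (1+q^(n+1)) * qbinom q (2*int n) (int n + int d) / qint q n"
  proof -
    have "(\<Sum>i<Suc (Suc n). F1 d (Suc n) i) = (1+q^(n+1)) * (\<Sum>i<Suc n. F1 d n i) + (- G1 d n 0)"
      unfolding A B C D E by simp
    thus ?thesis unfolding G H .
  qed
  thus ?thesis unfolding T1_def using dz by (simp add: field_simps)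
qed

lemma S1_base: "S1 d d = 0"
  unfolding S1_def by (rule sum.neutral) (auto simp: qbinom_def)

lemma T1_base: "T1 d d = 0"
  unfolding T1_def F1_def by (simp add: qbinom_neg)

lemma id1:
  assumes d1: "d \<ge> 1" and dn: "d \<le> n"
  shows "S1 d n = T1 d n"
  using dn
proof (induction n rule: dec_induct)
  case base
  then show ?case using S1_base T1_base by simp
next
  case (step n)
  then show ?case using S1_step T1_step d1 by simp
qed

lemma rhs1:
  assumes d1: "d \<ge> 1" and dn: "d \<le> n"
  shows "- (\<Sum>k=1..(n+1-d) div 2. (-1) ^ k
            * q powi (3 * int k ^ 2 + (3 * int d - 5) * int k - 2 * int d + 2)
            * qint q (2*d + 4*k - 2) / (qint q d * qint q n)
            * qbinom q (2 * int n) (int n - int d - 2 * int k + 1)) = T1 d n"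
proof -
  define K where "K = (n+1-d) div 2"
  have dz: "qint q d \<noteq> 0" "qint q n \<noteq> 0" using qint_nz assms by auto
  have t: "- ((-1) ^ (Suc i)
            * q powi (3 * int (Suc i) ^ 2 + (3 * int d - 5) * int (Suc i) - 2 * int d + 2)
            * qint q (2*d + 4*(Suc i) - 2) / (qint q d * qint q n)
            * qbinom q (2 * int n) (int n - int d - 2 * int (Suc i) + 1)) = (1 / qint q d) * F1 d n i" for i
  proof -
    have e: "3 * int (Suc i) ^ 2 + (3 * int d - 5) * int (Suc i) - 2 * int d + 2 = int (E1 d i)"
      by (simp add: E1_def algebra_simps power2_eq_square)
    have e2: "2*d + 4*(Suc i) - 2 = 2*d+4*i+2" by simp
    have e3: "int n - int d - 2 * int (Suc i) + 1 = int n - int d - 2*int i - 1" by simp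
    show ?thesis unfolding e e2 e3 F1_def using dz by (simp add: field_simps)
  qed
  have "(\<Sum>k=1..K. (-1) ^ k
            * q powi (3 * int k ^ 2 + (3 * int d - 5) * int k - 2 * int d + 2)
            * qint q (2*d + 4*k - 2) / (qint q d * qint q n)
            * qbinom q (2 * int n) (int n - int d - 2 * int k + 1))
      = (\<Sum>i<K. (-1) ^ (Suc i)
            * q powi (3 * int (Suc i) ^ 2 + (3 * int d - 5) * int (Suc i) - 2 * int d + 2)
            * qint q (2*d + 4*(Suc i) - 2) / (qint q d * qint q n)
            * qbinom q (2 * int n) (int n - int d - 2 * int (Suc i) + 1))"
    by (simp only: One_nat_def sum.atLeast1_atMost_eq)
  hence "- (\<Sum>k=1..K. (-1) ^ k
            * q powi (3 * int k ^ 2 + (3 * int d - 5) * int k - 2 * int d + 2)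
            * qint q (2*d + 4*k - 2) / (qint q d * qint q n)
            * qbinom q (2 * int n) (int n - int d - 2 * int k + 1))
      = (\<Sum>i<K. (1 / qint q d) * F1 d n i)"
    by (simp only: t sum_negf[symmetric])
  also have "\<dots> = (\<Sum>i<Suc n. (1 / qint q d) * F1 d n i)"
  proof (rule sum.mono_neutral_left)
    show "finite {..<Suc n}" by simp
    show "{..<K} \<subseteq> {..<Suc n}" unfolding K_def by auto
    show "\<forall>i\<in>{..<Suc n} - {..<K}. 1 / qint q d * F1 d n i = 0"
    proof
      fix i assume "i \<in> {..<Suc n} - {..<K}"
      hence "K \<le> i" by simp
      hence "int n - int d - 2*int i - 1 < 0" unfolding K_def using dn by linarith
      thus "1 / qint q d * F1 d n i = 0" unfolding F1_def by (simp add: qbinom_neg)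
    qed
  qed
  also have "\<dots> = T1 d n" unfolding T1_def by (simp add: add_divide_distrib sum_divide_distrib)
  finally show ?thesis unfolding K_def .
qed

lemma rhs2:
  assumes d1: "d \<ge> 1" and dn: "d \<le> n - 1" and n1: "n \<ge> 1"
  shows "(\<Sum>k=d..n-1. q powi (int ((k+1) choose 2) - int (d choose 2))
              * (1 / qint q d) * qbinom q (2 * int n + 1) (int n - int k))
           + q powi (int ((n+1) choose 2) - int (d choose 2)) / qint q d = T2 d n"
proof -
  obtain m where m: "n = Suc m" using n1 by (cases n) auto
  have t: "q powi (int ((k+1) choose 2) - int (d choose 2)) * (1 / qint q d) * qbinom q (2 * int n + 1) (int n - int k)
     = (1 / qint q d) * F2 d n k" if "d \<le> k" for k
  proof -
    have "(d choose 2) \<le> (Suc k choose 2)" using that by (intro choose2_mono) auto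
    hence ee: "int ((k+1) choose 2) - int (d choose 2) = int ((Suc k choose 2) - (d choose 2))" by simp
    show ?thesis by (simp only: ee power_int_of_nat F2_def) (simp add: ac_simps)
  qed
  have "(d choose 2) \<le> (Suc n choose 2)" using dn by (intro choose2_mono) auto
  hence e: "int ((n+1) choose 2) - int (d choose 2) = int ((Suc n choose 2) - (d choose 2))" by simp
  have b0: "qbinom q (2 * int n + 1) (int n - int n) = 1" using qbinom_0 by simp
  have last: "q powi (int ((n+1) choose 2) - int (d choose 2)) / qint q d = (1 / qint q d) * F2 d n n"
    unfolding F2_def e b0 by simp
  have "(\<Sum>k=d..n-1. q powi (int ((k+1) choose 2) - int (d choose 2))
              * (1 / qint q d) * qbinom q (2 * int n + 1) (int n - int k))
      = (\<Sum>k=d..m. (1 / qint q d) * F2 d n k)"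
    using m t by (intro sum.cong) auto
  hence "(\<Sum>k=d..n-1. q powi (int ((k+1) choose 2) - int (d choose 2))
              * (1 / qint q d) * qbinom q (2 * int n + 1) (int n - int k))
           + q powi (int ((n+1) choose 2) - int (d choose 2)) / qint q d
      = (\<Sum>k=d..m. (1 / qint q d) * F2 d n k) + (1 / qint q d) * F2 d n (Suc m)"
    using last m by simp
  also have "\<dots> = (\<Sum>k=d..Suc m. (1 / qint q d) * F2 d n k)"
    using dn m by simp
  also have "\<dots> = T2 d n" unfolding T2_def m using dn m by (simp add: add_divide_distrib sum_divide_distrib)
  finally show ?thesis .
qed

end

theorem theorem1p4:
  fixes q :: "'a::field" and n d :: nat
  assumes q_generic: "\<forall>m::nat. m > 0 \<longrightarrow> q ^ m \<noteq> 1"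
    and "n \<ge> 1" and "1 \<le> d" and "d \<le> n - 1"
  shows "((\<Sum>k=1..n-1. q ^ k * qbinom q (2*int k) (int k + int d)
            * qpoch (- (q ^ (k+1))) q (n - k) / qint q k)
         = - (\<Sum>k=1..(n+1-d) div 2. (-1) ^ k
            * q powi (3 * int k ^ 2 + (3 * int d - 5) * int k - 2 * int d + 2)
            * qint q (2*d + 4*k - 2) / (qint q d * qint q n)
            * qbinom q (2 * int n) (int n - int d - 2 * int k + 1)))
     \<and> ((\<Sum>k=1..n. q ^ k * qbinom q (2*int k) (int k + int d)
            * (qpoch (- (q ^ (k+1))) q (n - k)) ^ 2 / qint q k)
         = (\<Sum>k=d..n-1. q powi (int ((k+1) choose 2) - int (d choose 2))
              * (1 / qint q d) * qbinom q (2 * int n + 1) (int n - int k))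
           + q powi (int ((n+1) choose 2) - int (d choose 2)) / qint q d)"
proof -
  interpret qgen q using q_generic by unfold_locales
  have dn: "d \<le> n" using assms by linarith
  have 1: "(\<Sum>k=1..n-1. q ^ k * qbinom q (2*int k) (int k + int d)
            * qpoch (- (q ^ (k+1))) q (n - k) / qint q k) = S1 d n" by (simp add: S1_def)
  have 2: "(\<Sum>k=1..n. q ^ k * qbinom q (2*int k) (int k + int d)
            * (qpoch (- (q ^ (k+1))) q (n - k)) ^ 2 / qint q k) = S2 d n" by (simp add: S2_def)
  show ?thesis
    unfolding 1 2 rhs1[OF assms(3) dn] rhs2[OF assms(3) assms(4) assms(2)]
    using id1[OF assms(3) dn] id2[OF assms(3) dn] by simp
qed

end
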